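(* Let $p>2$ be a prime number. Let $n\geq 0$ and $m\geq 1$ be integers, let $G$ be a finite $p$-group, let $f\in\mathcal{F}_G$, and let $H, C_1, C_2,\ldots, C_{p-1}$ be normal subgroups of $G$ such that: (1) $C_i\subsetneq H$ for all $1\leq i\leq p-1$; (2) $\displaystyle\max_{g\in H\setminus\left(\bigcup_{i=1}^{p-1}C_i\right)} b_{f(H,m)}(g)\leq n$. Then there exists a normal subgroup $N$ of $G$ such that: (a) $N\subseteq H$; (b) $\log_p|H:N|\leq n$; (c) $cl_f(N)\leq n+m$; (d) $N\not\subseteq\bigcup_{i=1}^{p-1}C_i$.
   Context: For a finite group $G$, $Z_G(x)$ is the centralizer of $x$ in $G$, and for a subset (or subgroup) $H$, $Z_G(H)=\bigcap_{h\in H}Z_G(h)$. Commutators are $[x,y]=x^{-1}y^{-1}xy$, and for subgroups $G_1,G_2$, $[G_1,G_2]$ is the subgroup generated by all $[g_1,g_2]$ with $g_i\in G_i$. For $g\in G$ and a subgroup $K$ of $G$, $b_K(g):=\log_p|K : K\cap Z_G(g)|$. $\mathcal{F}_G$ denotes the set of all functions $f$ from (normal subgroups of $G$) $\times\,\mathbb{N}_{\geq1}$ to (normal subgroups of $G$) such that: (i) $f(N,i)\subseteq f(M,j)$ whenever $N\subseteq M$ are normal subgroups of $G$ and $1\leq j\leq i$; (ii) $[N,f(N,i)]\neq[N,f(N,i+1)]$ for every normal subgroup $N$ of $G$ and every integer $i\geq1$ with $f(N,i)\not\subseteq Z_G(N)$. For $f\in\mathcal{F}_G$ and a normal subgroup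 $N$ of $G$, $cl_f(N):=\min\{n\in\mathbb{N} : f(N,n)\subseteq Z_G(N)\}$. *)

theory Defs
  imports "HOL-Algebra.Algebra" Complex_Main
begin

definition centralizer_elt :: "('a, 'b) monoid_scheme \<Rightarrow> 'a \<Rightarrow> 'a set" ("Z\<index>'(_')") where
  "centralizer_elt G x = {y \<in> carrier G. x \<otimes>\<^bsub>G\<^esub> y = y \<otimes>\<^bsub>G\<^esub> x}"

definition centralizer_set :: "('a, 'b) monoid_scheme \<Rightarrow> 'a set \<Rightarrow> 'a set" where
  "centralizer_set G H = {y \<in> carrier G. \<forall>h\<in>H. h \<otimes>\<^bsub>G\<^esub> y = y \<otimes>\<^bsub>G\<^esub> h}"

definition commutator :: "('a, 'b) monoid_scheme \<Rightarrow> 'a \<Rightarrow> 'a \<Rightarrow> 'a" where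
  "commutator G x y = inv\<^bsub>G\<^esub> x \<otimes>\<^bsub>G\<^esub> inv\<^bsub>G\<^esub> y \<otimes>\<^bsub>G\<^esub> x \<otimes>\<^bsub>G\<^esub> y"

definition comm_subgroup :: "('a, 'b) monoid_scheme \<Rightarrow> 'a set \<Rightarrow> 'a set \<Rightarrow> 'a set" where
  "comm_subgroup G G1 G2 = generate G {commutator G g1 g2 | g1 g2. g1 \<in> G1 \<and> g2 \<in> G2}"

definition p_group :: "('a, 'b) monoid_scheme \<Rightarrow> nat \<Rightarrow> bool" where
  "p_group G p \<longleftrightarrow> group G \<and> finite (carrier G) \<and> (\<exists>k. card (carrier G) = p ^ k)"

definition b_fun :: "('a, 'b) monoid_scheme \<Rightarrow> nat \<Rightarrow> 'a set \<Rightarrow> 'a \<Rightarrow> real" where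
  "b_fun G p K g = log (real p) (real (card K) / real (card (K \<inter> centralizer_elt G g)))"

text \<open>The class F_G; f is only constrained on normal subgroups and indices i >= 1.\<close>
definition F_class :: "('a, 'b) monoid_scheme \<Rightarrow> ('a set \<Rightarrow> nat \<Rightarrow> 'a set) set" where
  "F_class G = {f.
     (\<forall>N i. N \<lhd> G \<and> 1 \<le> i \<longrightarrow> f N i \<lhd> G) \<and>
     (\<forall>N M i j. N \<lhd> G \<and> M \<lhd> G \<and> N \<subseteq> M \<and> 1 \<le> j \<and> j \<le> i \<longrightarrow> f N i \<subseteq> f M j) \<and>
     (\<forall>N i. N \<lhd> G \<and> 1 \<le> i \<and> \<not> f N i \<subseteq> centralizer_set G N \<longrightarrow>
            comm_subgroup G N (f N i) \<noteq> comm_subgroup G N (f N (i + 1)))}"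

definition cl_f :: "('a, 'b) monoid_scheme \<Rightarrow> ('a set \<Rightarrow> nat \<Rightarrow> 'a set) \<Rightarrow> 'a set \<Rightarrow> nat" where
  "cl_f G f N = (LEAST n. 1 \<le> n \<and> f N n \<subseteq> centralizer_set G N)"

end

theory Submission imports Defs begin

locale pgrp = group G for G (structure) +
  fixes p a :: nat
  assumes pr: "Factorial_Ring.prime p" and fin: "finite (carrier G)" and ordG: "order G = p ^ a"
begin

lemma p_ge2: "p \<ge> 2"
  using pr prime_ge_2_nat by blast

lemma fin_subgroupI:
  assumes "S \<subseteq> carrier G" "\<one> \<in> S" "\<And>x y. x \<in> S \<Longrightarrow> y \<in> S \<Longrightarrow> x \<otimes> y \<in> S"
  shows "subgroup S G"
proof (rule subgroupI)
  show "S \<noteq> {}" using assms(2) by blast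
  fix x assume x: "x \<in> S"
  have xc: "x \<in> carrier G" using x assms(1) by blast
  have pw: "x [^] (n::nat) \<in> S" for n
    by (induction n) (auto simp: assms(2,3) x)
  have o: "order G \<ge> 1" using fin order_gt_0_iff_finite by simp
  have "x [^] (order G - 1) \<otimes> x = x [^] (Suc (order G - 1))"
    using xc by simp
  also have "\<dots> = \<one>" using o pow_order_eq_1[OF xc] by simp
  finally have "inv x = x [^] (order G - 1)"
    using xc by (simp add: inv_equality)
  then show "inv x \<in> S" using pw by simp
qed (use assms in auto)

lemma card_sub_pow:
  assumes "subgroup K G" shows "\<exists>j. card K = p ^ j"
proof -
  have "card K dvd order G" using lagrange[OF assms] by (metis dvd_triv_right)
  then show ?thesis using ordG divides_primepow_nat[OF pr] by auto
qed

lemma card_sub_pos: "subgroup K G \<Longrightarrow> card K > 0"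
  using subgroup.finite_imp_card_positive fin by blast

lemma card_proper:
  assumes "subgroup K G" "subgroup H G" "K \<subseteq> H" "K \<noteq> H"
  shows "card K * p \<le> card H"
proof -
  obtain j where j: "card K = p ^ j" using card_sub_pow assms(1) by blast
  obtain s where s: "card H = p ^ s" using card_sub_pow assms(2) by blast
  have fH: "finite H" using assms(2) fin subgroup.subset finite_subset by blast
  have "card K < card H" using psubset_card_mono[OF fH] assms(3,4) by blast
  then have "j < s" using j s p_ge2 by (metis power_strict_increasing_iff One_nat_def Suc_1 Suc_le_lessD)
  then have "p ^ j * p \<le> p ^ s" using p_ge2
    by (metis Suc_leI power_Suc2 power_increasing Suc_1 le_trans one_le_numeral)
  then show ?thesis using j s by simp
qed

lemma sub_fin: "subgroup K G \<Longrightarrow> finite K"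
  using fin subgroup.subset finite_subset by blast

lemma card_ins_le: "finite A \<Longrightarrow> card (insert x A) \<le> Suc (card A)"
  by (simp add: card_insert_if)

lemma cover:
  assumes H: "subgroup H G" and I: "finite I" "card I \<le> p"
    and K: "\<And>i. i \<in> I \<Longrightarrow> subgroup (K i) G \<and> K i \<subseteq> H \<and> K i \<noteq> H"
  shows "\<exists>x\<in>H. \<forall>i\<in>I. x \<notin> K i"
proof (cases "I = {}")
  case True then show ?thesis using subgroup.one_closed[OF H] by blast
next
  case False
  then obtain i0 where i0: "i0 \<in> I" by blast
  define c where "c = card H div p"
  have pc: "p * c \<le> card H" unfolding c_def by simp
  have cK: "card (K i) \<le> c" if "i \<in> I" for i
  proof -
    have "card (K i) * p \<le> card H" using card_proper K[OF that] H by blast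
    then have "card (K i) * p div p \<le> card H div p" by (rule div_le_mono)
    then show ?thesis unfolding c_def using p_ge2 by simp
  qed
  have c1: "c \<ge> 1"
  proof -
    have "subgroup (K i0) G" using K[OF i0] by blast
    then have "card (K i0) > 0" by (rule card_sub_pos)
    then show ?thesis using cK[OF i0] by simp
  qed
  have fK: "finite (K i)" if "i \<in> I" for i using K[OF that] sub_fin by blast
  have fU0: "finite (\<Union>i\<in>I. K i)" using I(1) fK by blast
  have fU: "finite (\<Union>i\<in>I. K i - {\<one>})" using I(1) fK by blast
  have sub: "(\<Union>i\<in>I. K i) \<subseteq> insert \<one> (\<Union>i\<in>I. K i - {\<one>})" by blast
  have s1: "card (\<Union>i\<in>I. K i) \<le> card (insert \<one> (\<Union>i\<in>I. K i - {\<one>}))"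
    by (rule card_mono[OF _ sub]) (rule finite_insert[THEN iffD2, OF fU])
  have s2: "card (insert \<one> (\<Union>i\<in>I. K i - {\<one>})) \<le> Suc (card (\<Union>i\<in>I. K i - {\<one>}))"
    by (rule card_ins_le[OF fU])
  have s3: "card (\<Union>i\<in>I. K i - {\<one>}) \<le> (\<Sum>i\<in>I. card (K i - {\<one>}))"
    by (rule card_UN_le[OF I(1)])
  have s4: "(\<Sum>i\<in>I. card (K i - {\<one>})) \<le> (\<Sum>i\<in>I. c - 1)"
  proof (rule sum_mono)
    fix i assume iI: "i \<in> I"
    have "card (K i - {\<one>}) = card (K i) - 1"
    proof -
      have "\<one> \<in> K i" using K[OF iI] subgroup.one_closed by blast
      then show ?thesis using fK[OF iI] by simp
    qed
    then show "card (K i - {\<one>}) \<le> c - 1" using cK[OF iI] by simp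
  qed
  have s5: "(\<Sum>i\<in>I. c - 1) \<le> p * (c - 1)" using I(2) by simp
  have e: "p * (c - 1) = p * c - p" by (simp add: diff_mult_distrib2)
  have "p \<le> p * c" using c1 by simp
  then have lt: "card (\<Union>i\<in>I. K i) < card H" using s1 s2 s3 s4 s5 e pc p_ge2 by linarith
  have "\<not> H \<subseteq> (\<Union>i\<in>I. K i)"
  proof
    assume "H \<subseteq> (\<Union>i\<in>I. K i)"
    then have "card H \<le> card (\<Union>i\<in>I. K i)" by (rule card_mono[OF fU0])
    then show False using lt by linarith
  qed
  then show ?thesis by blast
qed

lemma prod_formula:
  assumes A: "subgroup A G" and B: "subgroup B G"
  shows "card (A <#> B) * card (A \<inter> B) = card A * card B"
proof -
  define F where "F z = {(x,y). x \<in> A \<and> y \<in> B \<and> x \<otimes> y = z}" for z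
  have AB: "A \<times> B = (\<Union>z\<in>A <#> B. F z)"
    unfolding F_def set_mult_def by auto
  have fA: "finite A" using A sub_fin by blast
  have fB: "finite B" using B sub_fin by blast
  have fAB: "finite (A <#> B)" unfolding set_mult_def using fA fB by blast
  have fF: "finite (F z)" for z
  proof -
    have "F z \<subseteq> A \<times> B" unfolding F_def by blast
    then show ?thesis using finite_subset fA fB by blast
  qed
  have cF: "card (F z) = card (A \<inter> B)" if z: "z \<in> A <#> B" for z
  proof -
    obtain a0 b0 where a0: "a0 \<in> A" and b0: "b0 \<in> B" and zz: "z = a0 \<otimes> b0"
      using z unfolding set_mult_def by blast
    have a0c: "a0 \<in> carrier G" by (rule subgroup.mem_carrier[OF A a0])
    have b0c: "b0 \<in> carrier G" by (rule subgroup.mem_carrier[OF B b0])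
    have "bij_betw (\<lambda>t. (a0 \<otimes> t, inv t \<otimes> b0)) (A \<inter> B) (F z)"
    proof (rule bij_betw_byWitness[where f'="\<lambda>(x,y). inv a0 \<otimes> x"])
      show "\<forall>t\<in>A \<inter> B. (\<lambda>(x, y). inv a0 \<otimes> x) (a0 \<otimes> t, inv t \<otimes> b0) = t"
      proof
        fix t assume "t \<in> A \<inter> B"
        then have tc: "t \<in> carrier G" using subgroup.mem_carrier[OF A] by blast
        show "(\<lambda>(x, y). inv a0 \<otimes> x) (a0 \<otimes> t, inv t \<otimes> b0) = t"
          using a0c tc by (simp add: m_assoc[symmetric])
      qed
      show "\<forall>w\<in>F z. (\<lambda>t. (a0 \<otimes> t, inv t \<otimes> b0)) ((\<lambda>(x, y). inv a0 \<otimes> x) w) = w"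
      proof
        fix w assume w: "w \<in> F z"
        obtain x y where wxy: "w = (x,y)" by force
        have x: "x \<in> A" and y: "y \<in> B" and xy: "x \<otimes> y = z" using w wxy unfolding F_def by auto
        have xc: "x \<in> carrier G" by (rule subgroup.mem_carrier[OF A x])
        have yc: "y \<in> carrier G" by (rule subgroup.mem_carrier[OF B y])
        have e1: "a0 \<otimes> (inv a0 \<otimes> x) = x" using a0c xc by (simp add: m_assoc[symmetric])
        have "inv (inv a0 \<otimes> x) \<otimes> b0 = inv x \<otimes> (a0 \<otimes> b0)"
          using a0c xc b0c by (simp add: inv_mult_group m_assoc)
        also have "\<dots> = inv x \<otimes> (x \<otimes> y)" using xy zz by simp
        also have "\<dots> = y" using xc yc by (simp add: m_assoc[symmetric])
        finally show "(\<lambda>t. (a0 \<otimes> t, inv t \<otimes> b0)) ((\<lambda>(x, y). inv a0 \<otimes> x) w) = w"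
          using wxy e1 by simp
      qed
      show "(\<lambda>t. (a0 \<otimes> t, inv t \<otimes> b0)) ` (A \<inter> B) \<subseteq> F z"
      proof
        fix w assume "w \<in> (\<lambda>t. (a0 \<otimes> t, inv t \<otimes> b0)) ` (A \<inter> B)"
        then obtain t where t: "t \<in> A \<inter> B" and w: "w = (a0 \<otimes> t, inv t \<otimes> b0)" by blast
        have tc: "t \<in> carrier G" by (rule subgroup.mem_carrier[OF A IntD1[OF t]])
        have "a0 \<otimes> t \<in> A" using a0 t subgroup.m_closed[OF A] by blast
        moreover have "inv t \<otimes> b0 \<in> B" using b0 t subgroup.m_closed[OF B] subgroup.m_inv_closed[OF B] by blast
        moreover have "a0 \<otimes> t \<otimes> (inv t \<otimes> b0) = z"
        proof -
          have "t \<otimes> (inv t \<otimes> b0) = b0" using tc b0c by (simp add: m_assoc[symmetric])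
          then show ?thesis using a0c tc b0c zz by (simp add: m_assoc)
        qed
        ultimately show "w \<in> F z" unfolding F_def w by simp
      qed
      show "(\<lambda>(x, y). inv a0 \<otimes> x) ` F z \<subseteq> A \<inter> B"
      proof
        fix t assume "t \<in> (\<lambda>(x, y). inv a0 \<otimes> x) ` F z"
        then obtain x y where xyF: "(x,y) \<in> F z" and t: "t = inv a0 \<otimes> x" by force
        have x: "x \<in> A" and y: "y \<in> B" and xy: "x \<otimes> y = z" using xyF unfolding F_def by auto
        have xc: "x \<in> carrier G" by (rule subgroup.mem_carrier[OF A x])
        have yc: "y \<in> carrier G" by (rule subgroup.mem_carrier[OF B y])
        have "t \<in> A" using t x a0 subgroup.m_closed[OF A] subgroup.m_inv_closed[OF A] by blast
        moreover have "t = b0 \<otimes> inv y"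
        proof -
          have "x = a0 \<otimes> b0 \<otimes> inv y" using xy zz xc yc a0c b0c
            by (metis inv_solve_right m_closed)
          then show ?thesis using t a0c b0c yc by (simp add: m_assoc[symmetric])
        qed
        then have "t \<in> B" using y b0 subgroup.m_closed[OF B] subgroup.m_inv_closed[OF B] by simp
        ultimately show "t \<in> A \<inter> B" by blast
      qed
    qed
    then show ?thesis by (simp add: bij_betw_same_card)
  qed
  have disj: "\<forall>z1\<in>A <#> B. \<forall>z2\<in>A <#> B. z1 \<noteq> z2 \<longrightarrow> F z1 \<inter> F z2 = {}"
    unfolding F_def by blast
  have "card A * card B = card (A \<times> B)" by (simp add: card_cartesian_product)
  also have "\<dots> = (\<Sum>z\<in>A <#> B. card (F z))"
    unfolding AB by (rule card_UN_disjoint[OF fAB]) (use fF disj in auto)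
  also have "\<dots> = (\<Sum>z\<in>A <#> B. card (A \<inter> B))" using cF by simp
  also have "\<dots> = card (A <#> B) * card (A \<inter> B)" by simp
  finally show ?thesis by simp
qed

lemma index_mono:
  assumes A: "subgroup A G" and B: "subgroup B G" and Y: "subgroup Y G" and AB: "A \<subseteq> B"
  shows "card A * card (B \<inter> Y) \<le> card B * card (A \<inter> Y)"
proof -
  have BY: "subgroup (B \<inter> Y) G" using B Y subgroups_Inter_pair by blast
  have pf: "card (A <#> (B \<inter> Y)) * card (A \<inter> (B \<inter> Y)) = card A * card (B \<inter> Y)"
    by (rule prod_formula[OF A BY])
  have e: "A \<inter> (B \<inter> Y) = A \<inter> Y" using AB by blast
  have "A <#> (B \<inter> Y) \<subseteq> B"
    unfolding set_mult_def using AB subgroup.m_closed[OF B] by blast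
  then have "card (A <#> (B \<inter> Y)) \<le> card B" using card_mono sub_fin[OF B] by blast
  then have le: "card (A <#> (B \<inter> Y)) * card (A \<inter> Y) \<le> card B * card (A \<inter> Y)"
    by (rule mult_le_mono1)
  have "card A * card (B \<inter> Y) = card (A <#> (B \<inter> Y)) * card (A \<inter> Y)" using pf e by simp
  then show ?thesis using le by simp
qed

lemma icl: "x \<in> carrier G \<Longrightarrow> y \<in> carrier G \<Longrightarrow> inv x \<otimes> (x \<otimes> y) = y"
  by (simp add: m_assoc[symmetric])

lemma icr: "x \<in> carrier G \<Longrightarrow> y \<in> carrier G \<Longrightarrow> x \<otimes> (inv x \<otimes> y) = y"
  by (simp add: m_assoc[symmetric])

lemma set_mult_mem: "z \<in> A <#> B \<longleftrightarrow> (\<exists>a\<in>A. \<exists>b\<in>B. z = a \<otimes> b)"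
  unfolding set_mult_def by blast

lemma nconj: "N \<lhd> G \<Longrightarrow> x \<in> carrier G \<Longrightarrow> h \<in> N \<Longrightarrow> x \<otimes> h \<otimes> inv x \<in> N"
  using normal_invE(2) by blast

lemma nsub: "N \<lhd> G \<Longrightarrow> subgroup N G"
  using normal_invE(1) by blast

lemma ncar: "N \<lhd> G \<Longrightarrow> h \<in> N \<Longrightarrow> h \<in> carrier G"
  using normal_invE(1) subgroup.mem_carrier by metis

lemma normal_prod_sub:
  assumes N: "N \<lhd> G" and K: "subgroup K G"
  shows "subgroup (N <#> K) G"
proof (rule fin_subgroupI)
  have Nc: "N \<subseteq> carrier G" using nsub[OF N] subgroup.subset by blast
  have Kc: "K \<subseteq> carrier G" using K subgroup.subset by blast
  show "N <#> K \<subseteq> carrier G" using Nc Kc setmult_subset_G by blast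
  show "\<one> \<in> N <#> K" unfolding set_mult_mem
    using subgroup.one_closed[OF K] subgroup.one_closed[OF nsub[OF N]] by force
  fix x y assume x: "x \<in> N <#> K" and y: "y \<in> N <#> K"
  obtain n k where n: "n \<in> N" and k: "k \<in> K" and xe: "x = n \<otimes> k" using x set_mult_mem by blast
  obtain n' k' where n': "n' \<in> N" and k': "k' \<in> K" and ye: "y = n' \<otimes> k'" using y set_mult_mem by blast
  have nc: "n \<in> carrier G" "n' \<in> carrier G" using n n' Nc by auto
  have kc: "k \<in> carrier G" "k' \<in> carrier G" using k k' Kc by auto
  have "x \<otimes> y = (n \<otimes> (k \<otimes> n' \<otimes> inv k)) \<otimes> (k \<otimes> k')"
    using nc kc xe ye by (simp add: m_assoc icl)
  moreover have "n \<otimes> (k \<otimes> n' \<otimes> inv k) \<in> N"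
    using nconj[OF N kc(1) n'] n subgroup.m_closed[OF nsub[OF N]] by blast
  moreover have "k \<otimes> k' \<in> K" using k k' subgroup.m_closed[OF K] by blast
  ultimately show "x \<otimes> y \<in> N <#> K" unfolding set_mult_mem by blast
qed

lemma gen_normal:
  assumes XS: "XS \<subseteq> carrier G" and cl: "\<And>g x. g \<in> carrier G \<Longrightarrow> x \<in> XS \<Longrightarrow> g \<otimes> x \<otimes> inv g \<in> XS"
  shows "generate G XS \<lhd> G"
proof (rule normal_invI)
  show "subgroup (generate G XS) G" using generate_is_subgroup[OF XS] .
  fix g h assume g: "g \<in> carrier G" and h: "h \<in> generate G XS"
  from h show "g \<otimes> h \<otimes> inv g \<in> generate G XS"
  proof (induction h rule: generate.induct)
    case one
    have "g \<otimes> \<one> \<otimes> inv g = \<one>" using g by simp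
    then show ?case by (simp add: generate.one)
  next
    case (incl h)
    show ?case by (rule generate.incl[OF cl[OF g incl.hyps]])
  next
    case (inv h)
    have hc: "h \<in> carrier G" using inv.hyps XS by blast
    have "g \<otimes> inv h \<otimes> inv g = inv (g \<otimes> h \<otimes> inv g)"
      using hc g by (simp add: inv_mult_group m_assoc)
    then show ?case using generate.inv[OF cl[OF g inv.hyps]] by simp
  next
    case (eng h1 h2)
    have c1: "h1 \<in> carrier G" using generate_in_carrier[OF XS eng(1)] .
    have c2: "h2 \<in> carrier G" using generate_in_carrier[OF XS eng(2)] .
    have "g \<otimes> (h1 \<otimes> h2) \<otimes> inv g = (g \<otimes> h1 \<otimes> inv g) \<otimes> (g \<otimes> h2 \<otimes> inv g)"
      using c1 c2 g by (simp add: m_assoc icl)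
    then show ?case using generate.eng eng.IH by simp
  qed
qed

lemma rcos_mem: "z \<in> W #> y \<longleftrightarrow> (\<exists>w\<in>W. z = w \<otimes> y)"
  unfolding r_coset_def by blast

lemma lcos_mem: "z \<in> y <# W \<longleftrightarrow> (\<exists>w\<in>W. z = y \<otimes> w)"
  unfolding l_coset_def by blast

lemma conj_coset:
  assumes W: "W \<lhd> G" and g: "g \<in> carrier G" and y: "y \<in> carrier G"
  shows "g <# (W #> y) #> inv g = W #> (g \<otimes> y \<otimes> inv g)"
proof
  show "g <# (W #> y) #> inv g \<subseteq> W #> (g \<otimes> y \<otimes> inv g)"
  proof
    fix z assume "z \<in> g <# (W #> y) #> inv g"
    then obtain w where w: "w \<in> W" and z: "z = g \<otimes> (w \<otimes> y) \<otimes> inv g"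
      unfolding r_coset_def l_coset_def by blast
    have wc: "w \<in> carrier G" using ncar[OF W w] .
    have "z = (g \<otimes> w \<otimes> inv g) \<otimes> (g \<otimes> y \<otimes> inv g)"
      using z wc g y by (simp add: m_assoc icl)
    then show "z \<in> W #> (g \<otimes> y \<otimes> inv g)" unfolding rcos_mem using nconj[OF W g w] by blast
  qed
  show "W #> (g \<otimes> y \<otimes> inv g) \<subseteq> g <# (W #> y) #> inv g"
  proof
    fix z assume "z \<in> W #> (g \<otimes> y \<otimes> inv g)"
    then obtain w where w: "w \<in> W" and z: "z = w \<otimes> (g \<otimes> y \<otimes> inv g)"
      unfolding rcos_mem by blast
    have wc: "w \<in> carrier G" using ncar[OF W w] .
    have ig: "inv g \<in> carrier G" using g by simp
    have w': "inv g \<otimes> w \<otimes> inv (inv g) \<in> W" using nconj[OF W ig w] .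
    have "z = g \<otimes> ((inv g \<otimes> w \<otimes> inv (inv g)) \<otimes> y) \<otimes> inv g"
      using z wc g y by (simp add: m_assoc icl icr)
    moreover have "(inv g \<otimes> w \<otimes> inv (inv g)) \<otimes> y \<in> W #> y" unfolding rcos_mem using w' by blast
    then have "g \<otimes> ((inv g \<otimes> w \<otimes> inv (inv g)) \<otimes> y) \<in> g <# (W #> y)" unfolding lcos_mem by blast
    then have "g \<otimes> ((inv g \<otimes> w \<otimes> inv (inv g)) \<otimes> y) \<otimes> inv g \<in> g <# (W #> y) #> inv g"
      unfolding rcos_mem by blast
    ultimately show "z \<in> g <# (W #> y) #> inv g" by simp
  qed
qed

lemma rcos_eq_W:
  assumes W: "subgroup W G" and y: "y \<in> carrier G"
  shows "W #> y = W \<longleftrightarrow> y \<in> W"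
proof
  assume "W #> y = W"
  moreover have "y \<in> W #> y" using rcos_self[OF y W] .
  ultimately show "y \<in> W" by simp
next
  assume "y \<in> W"
  then show "W #> y = W" using subgroup.rcos_const[OF W is_group] by blast
qed

lemma rcos_eq_D:
  assumes W: "subgroup W G" and u: "u \<in> carrier G" and v: "v \<in> carrier G" and e: "W #> u = W #> v"
  shows "u \<otimes> inv v \<in> W"
proof -
  have "u \<in> W #> v" using rcos_self[OF u W] e by simp
  then obtain w where w: "w \<in> W" and uw: "u = w \<otimes> v" unfolding rcos_mem by blast
  have wc: "w \<in> carrier G" using subgroup.mem_carrier[OF W w] .
  have "u \<otimes> inv v = w" using uw wc v by (simp add: m_assoc)
  then show ?thesis using w by simp
qed

lemma fixed_coset:
  assumes W: "W \<lhd> G" and H: "H \<lhd> G" and WH: "W \<subseteq> H" "W \<noteq> H"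
  shows "\<exists>h\<in>H. h \<notin> W \<and> (\<forall>g\<in>carrier G. g \<otimes> h \<otimes> inv g \<otimes> inv h \<in> W)"
proof (rule ccontr)
  assume nf: "\<not> (\<exists>h\<in>H. h \<notin> W \<and> (\<forall>g\<in>carrier G. g \<otimes> h \<otimes> inv g \<otimes> inv h \<in> W))"
  define E where "E = {S. S \<subseteq> carrier G}"
  define \<phi> where "\<phi> = (\<lambda>g. \<lambda>S\<in>E. g <# S #> inv g)"
  have act: "group_action G E \<phi>" unfolding E_def \<phi>_def by (rule action_by_conjugation_on_power_set)
  have Ws: "subgroup W G" using nsub[OF W] .
  have Hs: "subgroup H G" using nsub[OF H] .
  have Hc: "H \<subseteq> carrier G" using Hs subgroup.subset by blast
  have Wc: "W \<subseteq> carrier G" using Ws subgroup.subset by blast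
  define XX where "XX = (\<lambda>y. W #> y) ` H - {W}"
  have cosE: "W #> y \<in> E" if "y \<in> carrier G" for y
    unfolding E_def using r_coset_subset_G[OF Wc that] by blast
  have phi: "\<phi> g (W #> y) = W #> (g \<otimes> y \<otimes> inv g)" if g: "g \<in> carrier G" and y: "y \<in> carrier G" for g y
  proof -
    have "\<phi> g (W #> y) = g <# (W #> y) #> inv g" unfolding \<phi>_def using cosE[OF y] by simp
    then show ?thesis using conj_coset[OF W g y] by simp
  qed
  have XE: "XX \<subseteq> E" unfolding XX_def using cosE Hc by blast
  have Xmem: "\<exists>y\<in>H. y \<notin> W \<and> S = W #> y" if "S \<in> XX" for S
  proof -
    obtain y where y: "y \<in> H" and S: "S = W #> y" and ne: "W #> y \<noteq> W" using \<open>S \<in> XX\<close> unfolding XX_def by blast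
    have "y \<notin> W" using ne rcos_eq_W[OF Ws] y Hc by blast
    then show ?thesis using y S by blast
  qed
  have orbX: "orbit G \<phi> S \<subseteq> XX" if S: "S \<in> XX" for S
  proof
    fix T assume "T \<in> orbit G \<phi> S"
    then obtain g where g: "g \<in> carrier G" and T: "T = \<phi> g S" unfolding orbit_def by blast
    obtain y where y: "y \<in> H" and yW: "y \<notin> W" and Sy: "S = W #> y" using Xmem[OF S] by blast
    have yc: "y \<in> carrier G" using y Hc by blast
    have T2: "T = W #> (g \<otimes> y \<otimes> inv g)" using T Sy phi[OF g yc] by simp
    have gyH: "g \<otimes> y \<otimes> inv g \<in> H" using nconj[OF H g y] .
    have "g \<otimes> y \<otimes> inv g \<notin> W"
    proof
      assume a1: "g \<otimes> y \<otimes> inv g \<in> W"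
      have ig: "inv g \<in> carrier G" using g by simp
      have "inv g \<otimes> (g \<otimes> y \<otimes> inv g) \<otimes> inv (inv g) \<in> W" using nconj[OF W ig a1] .
      moreover have "inv g \<otimes> (g \<otimes> y \<otimes> inv g) \<otimes> inv (inv g) = y"
        using g yc by (simp add: m_assoc icl)
      ultimately show False using yW by simp
    qed
    then have "W #> (g \<otimes> y \<otimes> inv g) \<noteq> W" using rcos_eq_W[OF Ws] gyH Hc by blast
    then show "T \<in> XX" unfolding XX_def using T2 gyH by blast
  qed
  have pdvd: "p dvd card (orbit G \<phi> S)" if S: "S \<in> XX" for S
  proof (rule ccontr)
    assume np: "\<not> p dvd card (orbit G \<phi> S)"
    have SE: "S \<in> E" using S XE by blast
    have "card (orbit G \<phi> S) * card (stabilizer G \<phi> S) = order G"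
      using group_action.orbit_stabilizer_theorem[OF act SE] .
    then have "card (orbit G \<phi> S) dvd p ^ a" using ordG by (metis dvd_triv_left)
    then obtain i where i: "card (orbit G \<phi> S) = p ^ i" using divides_primepow_nat[OF pr] by blast
    have "i = 0" using np i by (cases i) auto
    then have c1: "card (orbit G \<phi> S) = 1" using i by simp
    have "S \<in> orbit G \<phi> S" using group_action.orbit_refl[OF act SE] .
    then have orb1: "orbit G \<phi> S = {S}" using c1 by (metis card_1_singletonE singletonD)
    obtain y where y: "y \<in> H" and yW: "y \<notin> W" and Sy: "S = W #> y" using Xmem[OF S] by blast
    have yc: "y \<in> carrier G" using y Hc by blast
    have "\<forall>g\<in>carrier G. g \<otimes> y \<otimes> inv g \<otimes> inv y \<in> W"
    proof
      fix g assume g: "g \<in> carrier G"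
      have "\<phi> g S \<in> orbit G \<phi> S" unfolding orbit_def using g by blast
      then have "\<phi> g S = S" using orb1 by blast
      then have "W #> (g \<otimes> y \<otimes> inv g) = W #> y" using Sy phi[OF g yc] by simp
      then show "g \<otimes> y \<otimes> inv g \<otimes> inv y \<in> W" using rcos_eq_D[OF Ws] g yc by simp
    qed
    then show False using nf y yW by blast
  qed
  have XU: "XX = \<Union> ((\<lambda>S. orbit G \<phi> S) ` XX)"
  proof
    show "XX \<subseteq> \<Union> ((\<lambda>S. orbit G \<phi> S) ` XX)"
      using group_action.orbit_refl[OF act] XE by blast
    show "\<Union> ((\<lambda>S. orbit G \<phi> S) ` XX) \<subseteq> XX" using orbX by blast
  qed
  have fE: "finite E" unfolding E_def using fin by simp
  have fX: "finite XX" using XE fE finite_subset by blast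
  have disj: "pairwise disjnt ((\<lambda>S. orbit G \<phi> S) ` XX)"
  proof (rule pairwiseI)
    fix O1 O2 assume o1: "O1 \<in> (\<lambda>S. orbit G \<phi> S) ` XX" and o2: "O2 \<in> (\<lambda>S. orbit G \<phi> S) ` XX" and ne: "O1 \<noteq> O2"
    have "O1 \<in> orbits G E \<phi>" using o1 XE unfolding orbits_def by blast
    moreover have "O2 \<in> orbits G E \<phi>" using o2 XE unfolding orbits_def by blast
    ultimately have "O1 = O2 \<or> O1 \<inter> O2 = {}" by (rule group_action.disjoint_union[OF act])
    then show "disjnt O1 O2" using ne unfolding disjnt_def by blast
  qed
  have "card XX = sum card ((\<lambda>S. orbit G \<phi> S) ` XX)"
  proof -
    have "card (\<Union> ((\<lambda>S. orbit G \<phi> S) ` XX)) = sum card ((\<lambda>S. orbit G \<phi> S) ` XX)"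
      by (rule card_Union_disjoint[OF disj]) (use orbX fX finite_subset in blast)
    then show ?thesis using XU by simp
  qed
  moreover have "p dvd sum card ((\<lambda>S. orbit G \<phi> S) ` XX)"
    by (rule dvd_sum) (use pdvd in blast)
  ultimately have pX: "p dvd card XX" by simp
  define R where "R = card ((\<lambda>y. W #> y) ` H)"
  have Wim: "W \<in> (\<lambda>y. W #> y) ` H"
  proof -
    have "W #> \<one> = W" using coset_mult_one[OF Wc] .
    then show ?thesis using subgroup.one_closed[OF Hs] by force
  qed
  have fim: "finite ((\<lambda>y. W #> y) ` H)" using sub_fin[OF Hs] by blast
  have cX: "card XX = R - 1" unfolding XX_def R_def using card_Diff_singleton[OF Wim] .
  have RW: "card W * R = card H"
  proof -
    have U: "\<Union> ((\<lambda>y. W #> y) ` H) = H"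
    proof
      show "\<Union> ((\<lambda>y. W #> y) ` H) \<subseteq> H"
      proof
        fix z assume "z \<in> \<Union> ((\<lambda>y. W #> y) ` H)"
        then obtain y w where y: "y \<in> H" and w: "w \<in> W" and z: "z = w \<otimes> y" unfolding r_coset_def by blast
        show "z \<in> H" using z subgroup.m_closed[OF Hs] y w WH(1) by blast
      qed
      show "H \<subseteq> \<Union> ((\<lambda>y. W #> y) ` H)"
      proof
        fix y assume y: "y \<in> H"
        have "y \<in> W #> y" using rcos_self[OF _ Ws] y Hc by blast
        then show "y \<in> \<Union> ((\<lambda>y. W #> y) ` H)" using y by blast
      qed
    qed
    have "card W * card ((\<lambda>y. W #> y) ` H) = card (\<Union> ((\<lambda>y. W #> y) ` H))"
    proof (rule card_partition)
      show "finite ((\<lambda>y. W #> y) ` H)" using fim .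
      show "finite (\<Union> ((\<lambda>y. W #> y) ` H))" using U sub_fin[OF Hs] by simp
      show "card c = card W" if "c \<in> (\<lambda>y. W #> y) ` H" for c
      proof -
        from that obtain y where y: "y \<in> H" and c: "c = W #> y" by blast
        have "c \<in> rcosets W" using rcosetsI[OF Wc] y Hc c by blast
        then show "card c = card W" using card_rcosets_equal[OF _ Wc] by simp
      qed
      show "c1 \<inter> c2 = {}" if c1: "c1 \<in> (\<lambda>y. W #> y) ` H" and c2: "c2 \<in> (\<lambda>y. W #> y) ` H" and ne: "c1 \<noteq> c2" for c1 c2
      proof -
        have "c1 \<in> rcosets W" using c1 rcosetsI[OF Wc] Hc by blast
        moreover have "c2 \<in> rcosets W" using c2 rcosetsI[OF Wc] Hc by blast
        ultimately show "c1 \<inter> c2 = {}" using rcos_disjoint[OF Ws] ne unfolding pairwise_def disjnt_def by blast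
      qed
    qed
    then show ?thesis using U R_def by simp
  qed
  obtain s where s: "card H = p ^ s" using card_sub_pow[OF Hs] by blast
  have "R dvd p ^ s" using RW s by (metis dvd_triv_right)
  then obtain i where i: "R = p ^ i" using divides_primepow_nat[OF pr] by blast
  have "R \<noteq> 1"
  proof
    assume "R = 1"
    then have "card W = card H" using RW by simp
    then have "W = H" using card_subset_eq[OF sub_fin[OF Hs] WH(1)] by simp
    then show False using WH(2) by simp
  qed
  then have "i \<noteq> 0" using i by auto
  then have pR: "p dvd R" using i by simp
  have R1: "R \<ge> 1" using i p_ge2 by simp
  have "p dvd R - (R - 1)" using pR pX cX by (simp add: dvd_diff_nat)
  then have "p dvd 1" using R1 by simp
  then show False using pr p_ge2 by simp
qed

lemma sub_pow: "subgroup W G \<Longrightarrow> w \<in> W \<Longrightarrow> w [^] (n::nat) \<in> W"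
proof (induction n)
  case 0 then show ?case using subgroup.one_closed by simp
next
  case (Suc n)
  have "w [^] Suc n = w [^] n \<otimes> w" by simp
  then show ?case using Suc subgroup.m_closed by metis
qed

lemma index_p_super:
  assumes C: "C \<lhd> G" and H: "H \<lhd> G" and CH: "C \<subseteq> H" "C \<noteq> H"
  shows "\<exists>W. W \<lhd> G \<and> C \<subseteq> W \<and> W \<subseteq> H \<and> card H = p * card W
           \<and> (\<forall>y\<in>H. \<forall>g\<in>carrier G. g \<otimes> y \<otimes> inv g \<otimes> inv y \<in> W) \<and> (\<forall>y\<in>H. y [^] p \<in> W)"
proof -
  define WW where "WW = {W. W \<lhd> G \<and> C \<subseteq> W \<and> W \<subseteq> H \<and> W \<noteq> H}"
  have Hs: "subgroup H G" using nsub[OF H] .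
  have Hc: "H \<subseteq> carrier G" using Hs subgroup.subset by blast
  have "WW \<subseteq> Pow (carrier G)" unfolding WW_def using Hc by blast
  then have fWW: "finite WW" using fin finite_subset by blast
  have "C \<in> WW" unfolding WW_def using C CH by blast
  then obtain W where Wm: "W \<in> WW" and maxW: "\<And>W'. W' \<in> WW \<Longrightarrow> W \<subseteq> W' \<Longrightarrow> W = W'"
    using finite_has_maximal[OF fWW] by blast
  have W: "W \<lhd> G" and CW: "C \<subseteq> W" and WH: "W \<subseteq> H" and WnH: "W \<noteq> H" using Wm unfolding WW_def by auto
  have maxW': "K = H" if K: "K \<lhd> G" "W \<subseteq> K" "K \<subseteq> H" "K \<noteq> W" for K
  proof (rule ccontr)
    assume "K \<noteq> H"
    then have "K \<in> WW" unfolding WW_def using K CW by blast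
    then show False using maxW K by blast
  qed
  have Ws: "subgroup W G" using nsub[OF W] .
  have Wc: "W \<subseteq> carrier G" using Ws subgroup.subset by blast
  obtain h where hH: "h \<in> H" and hW: "h \<notin> W" and hfix: "\<forall>g\<in>carrier G. g \<otimes> h \<otimes> inv g \<otimes> inv h \<in> W"
    using fixed_coset[OF W H WH WnH] by blast
  define F where "F = {y \<in> H. \<forall>g\<in>carrier G. g \<otimes> y \<otimes> inv g \<otimes> inv y \<in> W}"
  have FH: "F \<subseteq> H" unfolding F_def by blast
  have Fs: "subgroup F G"
  proof (rule fin_subgroupI)
    show "F \<subseteq> carrier G" using FH Hc by blast
    show "\<one> \<in> F" unfolding F_def using subgroup.one_closed[OF Hs] subgroup.one_closed[OF Ws] by simp
    fix y z assume y: "y \<in> F" and z: "z \<in> F"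
    have yc: "y \<in> carrier G" using y FH Hc by blast
    have zc: "z \<in> carrier G" using z FH Hc by blast
    have "y \<otimes> z \<in> H" using y z FH subgroup.m_closed[OF Hs] by blast
    moreover have "\<forall>g\<in>carrier G. g \<otimes> (y \<otimes> z) \<otimes> inv g \<otimes> inv (y \<otimes> z) \<in> W"
    proof
      fix g assume g: "g \<in> carrier G"
      have a1: "g \<otimes> y \<otimes> inv g \<otimes> inv y \<in> W" using y g unfolding F_def by blast
      have a2: "g \<otimes> z \<otimes> inv g \<otimes> inv z \<in> W" using z g unfolding F_def by blast
      have a3: "y \<otimes> (g \<otimes> z \<otimes> inv g \<otimes> inv z) \<otimes> inv y \<in> W" using nconj[OF W yc a2] .
      have "g \<otimes> (y \<otimes> z) \<otimes> inv g \<otimes> inv (y \<otimes> z) = (g \<otimes> y \<otimes> inv g \<otimes> inv y) \<otimes> (y \<otimes> (g \<otimes> z \<otimes> inv g \<otimes> inv z) \<otimes> inv y)"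
        using g yc zc by (simp add: m_assoc icl inv_mult_group)
      then show "g \<otimes> (y \<otimes> z) \<otimes> inv g \<otimes> inv (y \<otimes> z) \<in> W"
        using a1 a3 subgroup.m_closed[OF Ws] by simp
    qed
    ultimately show "y \<otimes> z \<in> F" unfolding F_def by blast
  qed
  have Fn: "F \<lhd> G"
  proof (rule normal_invI[OF Fs])
    fix k y assume k: "k \<in> carrier G" and y: "y \<in> F"
    have yc: "y \<in> carrier G" using y FH Hc by blast
    have "k \<otimes> y \<otimes> inv k \<in> H" using nconj[OF H k] y FH by blast
    moreover have "\<forall>g\<in>carrier G. g \<otimes> (k \<otimes> y \<otimes> inv k) \<otimes> inv g \<otimes> inv (k \<otimes> y \<otimes> inv k) \<in> W"
    proof
      fix g assume g: "g \<in> carrier G"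
      define g' where "g' = inv k \<otimes> g \<otimes> k"
      have g'c: "g' \<in> carrier G" unfolding g'_def using g k by simp
      have a1: "g' \<otimes> y \<otimes> inv g' \<otimes> inv y \<in> W" using y g'c unfolding F_def by blast
      have a2: "k \<otimes> (g' \<otimes> y \<otimes> inv g' \<otimes> inv y) \<otimes> inv k \<in> W" using nconj[OF W k a1] .
      have "g \<otimes> (k \<otimes> y \<otimes> inv k) \<otimes> inv g \<otimes> inv (k \<otimes> y \<otimes> inv k) = k \<otimes> (g' \<otimes> y \<otimes> inv g' \<otimes> inv y) \<otimes> inv k"
        unfolding g'_def using g k yc by (simp add: m_assoc icl icr inv_mult_group)
      then show "g \<otimes> (k \<otimes> y \<otimes> inv k) \<otimes> inv g \<otimes> inv (k \<otimes> y \<otimes> inv k) \<in> W" using a2 by simp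
    qed
    ultimately show "k \<otimes> y \<otimes> inv k \<in> F" unfolding F_def by blast
  qed
  have WF: "W \<subseteq> F"
  proof
    fix w assume w: "w \<in> W"
    have wc: "w \<in> carrier G" using w Wc by blast
    have "\<forall>g\<in>carrier G. g \<otimes> w \<otimes> inv g \<otimes> inv w \<in> W"
      using nconj[OF W _ w] subgroup.m_closed[OF Ws] subgroup.m_inv_closed[OF Ws w] by blast
    then show "w \<in> F" unfolding F_def using w WH by blast
  qed
  have "h \<in> F" unfolding F_def using hH hfix by blast
  then have "F \<noteq> W" using hW by blast
  then have FeH: "F = H" using maxW'[OF Fn WF FH] by blast
  have comm: "\<forall>y\<in>H. \<forall>g\<in>carrier G. g \<otimes> y \<otimes> inv g \<otimes> inv y \<in> W"
    using FeH unfolding F_def by blast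
  have hc: "h \<in> carrier G" using hH Hc by blast
  have "h [^] (p ^ a) \<in> W"
    using pow_order_eq_1[OF hc] ordG subgroup.one_closed[OF Ws] by simp
  then have ex: "\<exists>j. h [^] (p ^ j) \<in> W" by blast
  define j0 where "j0 = (LEAST j. h [^] (p ^ j) \<in> W)"
  have j0W: "h [^] (p ^ j0) \<in> W" unfolding j0_def using LeastI_ex[OF ex] .
  have "j0 \<noteq> 0"
  proof
    assume "j0 = 0"
    then show False using j0W hW hc by simp
  qed
  then obtain j1 where j1: "j0 = Suc j1" using not0_implies_Suc by blast
  define x where "x = h [^] (p ^ j1)"
  have xW: "x \<notin> W"
  proof
    assume "x \<in> W"
    then have "j0 \<le> j1" unfolding x_def j0_def by (rule Least_le)
    then show False using j1 by simp
  qed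
  have xc: "x \<in> carrier G" unfolding x_def using hc by simp
  have xpW: "x [^] p \<in> W"
  proof -
    have "x [^] p = h [^] (p ^ j1 * p)" unfolding x_def using hc by (simp add: nat_pow_pow)
    also have "\<dots> = h [^] (p ^ j0)" using j1 by (simp add: mult.commute)
    finally show ?thesis using j0W by simp
  qed
  have xH: "x \<in> H" unfolding x_def using sub_pow[OF Hs hH] .
  define K where "K = {w \<otimes> x [^] k | w k. w \<in> W \<and> k < p}"
  have Kmem: "w \<otimes> x [^] k \<in> K" if "w \<in> W" "k < p" for w and k :: nat
    unfolding K_def using that by blast
  have p0: "0 < p" "1 < p" using p_ge2 by auto
  have KH: "K \<subseteq> H"
  proof
    fix z assume "z \<in> K"
    then obtain w and k :: nat where w: "w \<in> W" and z: "z = w \<otimes> x [^] k" unfolding K_def by blast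
    show "z \<in> H" using z subgroup.m_closed[OF Hs] w WH sub_pow[OF Hs xH] by blast
  qed
  have Ks: "subgroup K G"
  proof (rule fin_subgroupI)
    show "K \<subseteq> carrier G" using KH Hc by blast
    have "\<one> \<otimes> x [^] (0::nat) \<in> K" using Kmem[OF subgroup.one_closed[OF Ws] p0(1)] .
    then show "\<one> \<in> K" by simp
    fix y z assume y: "y \<in> K" and z: "z \<in> K"
    obtain w and i :: nat where w: "w \<in> W" and i: "i < p" and ye: "y = w \<otimes> x [^] i" using y unfolding K_def by blast
    obtain w' and j :: nat where w': "w' \<in> W" and j: "j < p" and ze: "z = w' \<otimes> x [^] j" using z unfolding K_def by blast
    have wc: "w \<in> carrier G" "w' \<in> carrier G" using w w' Wc by auto
    have xic: "x [^] i \<in> carrier G" using xc by simp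
    define w'' where "w'' = x [^] i \<otimes> w' \<otimes> inv (x [^] i)"
    have w'': "w'' \<in> W" unfolding w''_def using nconj[OF W xic w'] .
    have w''c: "w'' \<in> carrier G" using w'' Wc by blast
    have e1: "y \<otimes> z = (w \<otimes> w'') \<otimes> x [^] (i + j)"
      unfolding ye ze w''_def using wc xc by (simp add: m_assoc icl nat_pow_mult[symmetric])
    have ww: "w \<otimes> w'' \<in> W" using w w'' subgroup.m_closed[OF Ws] by blast
    show "y \<otimes> z \<in> K"
    proof (cases "i + j < p")
      case True
      then show ?thesis using e1 Kmem[OF ww True] by simp
    next
      case False
      define r where "r = i + j - p"
      have r: "r < p" "i + j = p + r" unfolding r_def using False i j by auto
      have "x [^] (i + j) = x [^] p \<otimes> x [^] r" using r(2) xc by (simp add: nat_pow_mult)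
      then have "y \<otimes> z = (w \<otimes> w'' \<otimes> x [^] p) \<otimes> x [^] r"
        using e1 wc w''c xc by (simp add: m_assoc)
      moreover have "w \<otimes> w'' \<otimes> x [^] p \<in> W" using ww xpW subgroup.m_closed[OF Ws] by blast
      ultimately show ?thesis using Kmem[OF _ r(1)] by simp
    qed
  qed
  have Kn: "K \<lhd> G"
  proof (rule normal_invI[OF Ks])
    fix g k assume g: "g \<in> carrier G" and k: "k \<in> K"
    have kH: "k \<in> H" using k KH by blast
    have kc: "k \<in> carrier G" using kH Hc by blast
    have eq: "g \<otimes> k \<otimes> inv g = (g \<otimes> k \<otimes> inv g \<otimes> inv k) \<otimes> k"
      using g kc by (simp add: m_assoc)
    have mem: "g \<otimes> k \<otimes> inv g \<otimes> inv k \<in> K"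
    proof -
      have "g \<otimes> k \<otimes> inv g \<otimes> inv k \<in> W" using comm kH g by blast
      then have "(g \<otimes> k \<otimes> inv g \<otimes> inv k) \<otimes> x [^] (0::nat) \<in> K" using Kmem p0 by blast
      then show ?thesis using Wc \<open>g \<otimes> k \<otimes> inv g \<otimes> inv k \<in> W\<close> by (simp add: subsetD)
    qed
    have "(g \<otimes> k \<otimes> inv g \<otimes> inv k) \<otimes> k \<in> K" using subgroup.m_closed[OF Ks mem k] .
    then show "g \<otimes> k \<otimes> inv g \<in> K" by (subst eq)
  qed
  have WK: "W \<subseteq> K"
  proof
    fix w assume w: "w \<in> W"
    then have "w \<otimes> x [^] (0::nat) \<in> K" using Kmem p0 by blast
    then show "w \<in> K" using w Wc by (simp add: subsetD)
  qed
  have "x \<in> K"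
  proof -
    have "\<one> \<otimes> x [^] (1::nat) \<in> K" using Kmem[OF subgroup.one_closed[OF Ws] p0(2)] .
    then show ?thesis using xc by simp
  qed
  then have "K \<noteq> W" using xW by blast
  then have KeH: "K = H" using maxW'[OF Kn WK KH] by blast
  have cK: "card K \<le> p * card W"
  proof -
    have "K = (\<Union>k\<in>{..<p}. W #> x [^] (k::nat))" unfolding K_def r_coset_def by blast
    then have "card K \<le> (\<Sum>k\<in>{..<p}. card (W #> x [^] k))" using card_UN_le[OF finite_lessThan] by simp
    also have "\<dots> \<le> (\<Sum>k\<in>{..<p}. card W)"
    proof (rule sum_mono)
      fix k assume "k \<in> {..<p}"
      have "W #> x [^] k = (\<lambda>w. w \<otimes> x [^] k) ` W" unfolding r_coset_def by blast
      then show "card (W #> x [^] k) \<le> card W" using card_image_le sub_fin[OF Ws] by simp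
    qed
    also have "\<dots> = p * card W" by simp
    finally show ?thesis .
  qed
  have "card W * p \<le> card H" using card_proper[OF Ws Hs WH WnH] .
  then have cardH: "card H = p * card W" using cK KeH by (simp add: mult.commute)
  have powp: "\<forall>y\<in>H. y [^] p \<in> W"
  proof
    fix y assume "y \<in> H"
    then have "y \<in> K" using KeH by simp
    then obtain w and k :: nat where w: "w \<in> W" and ye: "y = w \<otimes> x [^] k" unfolding K_def by blast
    define zz where "zz = x [^] k"
    have zc: "zz \<in> carrier G" unfolding zz_def using xc by simp
    have wc: "w \<in> carrier G" using w Wc by blast
    have claim: "\<exists>w1\<in>W. (w \<otimes> zz) [^] n = w1 \<otimes> zz [^] n" for n :: nat
    proof (induction n)
      case 0
      then show ?case using subgroup.one_closed[OF Ws] by force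
    next
      case (Suc n)
      then obtain w1 where w1: "w1 \<in> W" and e: "(w \<otimes> zz) [^] n = w1 \<otimes> zz [^] n" by blast
      have w1c: "w1 \<in> carrier G" using w1 Wc by blast
      have znc: "zz [^] n \<in> carrier G" using zc by simp
      define w2 where "w2 = w1 \<otimes> (zz [^] n \<otimes> w \<otimes> inv (zz [^] n))"
      have w2: "w2 \<in> W" unfolding w2_def using w1 nconj[OF W znc w] subgroup.m_closed[OF Ws] by blast
      have "(w \<otimes> zz) [^] Suc n = w1 \<otimes> zz [^] n \<otimes> (w \<otimes> zz)" using e by simp
      also have "\<dots> = w2 \<otimes> zz [^] Suc n"
        unfolding w2_def using w1c znc wc zc by (simp add: m_assoc icl)
      finally show ?case using w2 by blast
    qed
    obtain w1 where w1: "w1 \<in> W" and e: "(w \<otimes> zz) [^] p = w1 \<otimes> zz [^] p" using claim by blast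
    have "zz [^] p = (x [^] p) [^] k" unfolding zz_def using xc by (simp add: nat_pow_pow mult.commute)
    then have "zz [^] p \<in> W" using sub_pow[OF Ws xpW] by simp
    then show "y [^] p \<in> W" using e ye w1 subgroup.m_closed[OF Ws] zz_def by simp
  qed
  show ?thesis using W CW WH cardH comm powp by blast
qed

lemma cyc_ext_sub:
  assumes U: "U \<lhd> G" and xc: "x \<in> carrier G" and xp: "x [^] p \<in> U"
  shows "subgroup {u \<otimes> x [^] k | u k. u \<in> U \<and> k < p} G"
    and "card {u \<otimes> x [^] k | u k. u \<in> U \<and> k < p} \<le> p * card U"
    and "U \<subseteq> {u \<otimes> x [^] k | u k. u \<in> U \<and> k < p}"
    and "x \<in> {u \<otimes> x [^] k | u k. u \<in> U \<and> k < p}"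
proof -
  define K where "K = {u \<otimes> x [^] k | u k. u \<in> U \<and> k < p}"
  have Us: "subgroup U G" using nsub[OF U] .
  have Uc: "U \<subseteq> carrier G" using Us subgroup.subset by blast
  have Kmem: "w \<otimes> x [^] k \<in> K" if "w \<in> U" "k < p" for w and k :: nat
    unfolding K_def using that by blast
  have p0: "0 < p" "1 < p" using p_ge2 by auto
  have "subgroup K G"
  proof (rule fin_subgroupI)
    show "K \<subseteq> carrier G"
    proof
      fix z assume "z \<in> K"
      then obtain w and k :: nat where w: "w \<in> U" and z: "z = w \<otimes> x [^] k" unfolding K_def by blast
      show "z \<in> carrier G" using z w Uc xc by blast
    qed
    have "\<one> \<otimes> x [^] (0::nat) \<in> K" using Kmem[OF subgroup.one_closed[OF Us] p0(1)] .
    then show "\<one> \<in> K" by simp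
    fix y z assume y: "y \<in> K" and z: "z \<in> K"
    obtain w and i :: nat where w: "w \<in> U" and i: "i < p" and ye: "y = w \<otimes> x [^] i" using y unfolding K_def by blast
    obtain w' and j :: nat where w': "w' \<in> U" and j: "j < p" and ze: "z = w' \<otimes> x [^] j" using z unfolding K_def by blast
    have wc: "w \<in> carrier G" "w' \<in> carrier G" using w w' Uc by auto
    have xic: "x [^] i \<in> carrier G" using xc by simp
    define w'' where "w'' = x [^] i \<otimes> w' \<otimes> inv (x [^] i)"
    have w'': "w'' \<in> U" unfolding w''_def using nconj[OF U xic w'] .
    have w''c: "w'' \<in> carrier G" using w'' Uc by blast
    have e1: "y \<otimes> z = (w \<otimes> w'') \<otimes> x [^] (i + j)"
      unfolding ye ze w''_def using wc xc by (simp add: m_assoc icl nat_pow_mult[symmetric])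
    have ww: "w \<otimes> w'' \<in> U" using w w'' subgroup.m_closed[OF Us] by blast
    show "y \<otimes> z \<in> K"
    proof (cases "i + j < p")
      case True
      then show ?thesis using e1 Kmem[OF ww True] by simp
    next
      case False
      define r where "r = i + j - p"
      have r: "r < p" "i + j = p + r" unfolding r_def using False i j by auto
      have "x [^] (i + j) = x [^] p \<otimes> x [^] r" using r(2) xc by (simp add: nat_pow_mult)
      then have "y \<otimes> z = (w \<otimes> w'' \<otimes> x [^] p) \<otimes> x [^] r"
        using e1 wc w''c xc by (simp add: m_assoc)
      moreover have "w \<otimes> w'' \<otimes> x [^] p \<in> U" using ww xp subgroup.m_closed[OF Us] by blast
      ultimately show ?thesis using Kmem[OF _ r(1)] by simp
    qed
  qed
  then show "subgroup {u \<otimes> x [^] k | u k. u \<in> U \<and> k < p} G" unfolding K_def .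
  have "card K \<le> p * card U"
  proof -
    have "K = (\<Union>k\<in>{..<p}. U #> x [^] (k::nat))" unfolding K_def r_coset_def by blast
    then have "card K \<le> (\<Sum>k\<in>{..<p}. card (U #> x [^] k))" using card_UN_le[OF finite_lessThan] by simp
    also have "\<dots> \<le> (\<Sum>k\<in>{..<p}. card U)"
    proof (rule sum_mono)
      fix k assume "k \<in> {..<p}"
      have "U #> x [^] k = (\<lambda>w. w \<otimes> x [^] k) ` U" unfolding r_coset_def by blast
      then show "card (U #> x [^] k) \<le> card U" using card_image_le sub_fin[OF Us] by simp
    qed
    also have "\<dots> = p * card U" by simp
    finally show ?thesis .
  qed
  then show "card {u \<otimes> x [^] k | u k. u \<in> U \<and> k < p} \<le> p * card U" unfolding K_def .
  show "U \<subseteq> {u \<otimes> x [^] k | u k. u \<in> U \<and> k < p}"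
  proof
    fix w assume w: "w \<in> U"
    then have "w \<otimes> x [^] (0::nat) \<in> K" using Kmem p0 by blast
    then show "w \<in> {u \<otimes> x [^] k | u k. u \<in> U \<and> k < p}" using w Uc K_def by (simp add: subsetD)
  qed
  have "\<one> \<otimes> x [^] (1::nat) \<in> K" using Kmem[OF subgroup.one_closed[OF Us] p0(2)] .
  then show "x \<in> {u \<otimes> x [^] k | u k. u \<in> U \<and> k < p}" using xc K_def by simp
qed

lemma between_normal:
  assumes K: "subgroup K G" and UK: "U \<subseteq> K" and KH: "K \<subseteq> H" and Hc: "H \<subseteq> carrier G"
    and comm: "\<forall>y\<in>H. \<forall>g\<in>carrier G. g \<otimes> y \<otimes> inv g \<otimes> inv y \<in> U"
  shows "K \<lhd> G"
proof (rule normal_invI[OF K])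
  fix g k assume g: "g \<in> carrier G" and k: "k \<in> K"
  have kH: "k \<in> H" using k KH by blast
  have kc: "k \<in> carrier G" using kH Hc by blast
  have eq: "g \<otimes> k \<otimes> inv g = (g \<otimes> k \<otimes> inv g \<otimes> inv k) \<otimes> k"
    using g kc by (simp add: m_assoc)
  have mem: "g \<otimes> k \<otimes> inv g \<otimes> inv k \<in> K" using comm kH g UK by blast
  have "(g \<otimes> k \<otimes> inv g \<otimes> inv k) \<otimes> k \<in> K" using subgroup.m_closed[OF K mem k] .
  then show "g \<otimes> k \<otimes> inv g \<in> K" by (subst eq)
qed

lemma centr_sub:
  assumes g: "g \<in> carrier G" shows "subgroup (centralizer_elt G g) G"
proof (rule fin_subgroupI)
  show "centralizer_elt G g \<subseteq> carrier G" unfolding centralizer_elt_def by blast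
  show "\<one> \<in> centralizer_elt G g" unfolding centralizer_elt_def using g by simp
  fix y z assume y: "y \<in> centralizer_elt G g" and z: "z \<in> centralizer_elt G g"
  have yc: "y \<in> carrier G" and yg: "g \<otimes> y = y \<otimes> g" using y unfolding centralizer_elt_def by auto
  have zc: "z \<in> carrier G" and zg: "g \<otimes> z = z \<otimes> g" using z unfolding centralizer_elt_def by auto
  have "g \<otimes> (y \<otimes> z) = y \<otimes> (g \<otimes> z)" using g yc zc yg by (simp add: m_assoc[symmetric])
  also have "\<dots> = y \<otimes> z \<otimes> g" using g yc zc zg by (simp add: m_assoc)
  finally show "y \<otimes> z \<in> centralizer_elt G g" unfolding centralizer_elt_def using yc zc by simp
qed

lemma log_drop:
  fixes x y :: real
  assumes x0: "0 < x" and xy: "x \<le> y / real p"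
  shows "log (real p) x \<le> log (real p) y - 1"
proof -
  have p1: "real p > 1" using p_ge2 by simp
  have yp: "0 < y / real p" using x0 xy by linarith
  have y0: "0 < y" using yp p1 by (simp add: zero_less_divide_iff)
  have "log (real p) x \<le> log (real p) (y / real p)" using x0 xy p1 by simp
  also have "\<dots> = log (real p) y - log (real p) (real p)"
    using log_divide[of "real p" y "real p"] y0 p1 by simp
  also have "\<dots> = log (real p) y - 1" using p1 by simp
  finally show ?thesis .
qed

lemma comm_conj:
  assumes x: "x \<in> carrier G" and y: "y \<in> carrier G" and k: "k \<in> carrier G"
  shows "k \<otimes> commutator G x y \<otimes> inv k = commutator G (k \<otimes> x \<otimes> inv k) (k \<otimes> y \<otimes> inv k)"
  unfolding commutator_def using x y k by (simp add: m_assoc inv_mult_group icl)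

lemma comm_closed: "x \<in> carrier G \<Longrightarrow> y \<in> carrier G \<Longrightarrow> commutator G x y \<in> carrier G"
  unfolding commutator_def by simp

lemma comm_normal:
  assumes H: "H \<lhd> G" and K: "K \<lhd> G"
  shows "comm_subgroup G H K \<lhd> G"
  unfolding comm_subgroup_def
proof (rule gen_normal)
  show "{commutator G g1 g2 |g1 g2. g1 \<in> H \<and> g2 \<in> K} \<subseteq> carrier G"
    using ncar[OF H] ncar[OF K] comm_closed by blast
  fix g z assume g: "g \<in> carrier G" and z: "z \<in> {commutator G g1 g2 |g1 g2. g1 \<in> H \<and> g2 \<in> K}"
  then obtain g1 g2 where g1: "g1 \<in> H" and g2: "g2 \<in> K" and ze: "z = commutator G g1 g2" by blast
  have "g \<otimes> z \<otimes> inv g = commutator G (g \<otimes> g1 \<otimes> inv g) (g \<otimes> g2 \<otimes> inv g)"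
    using comm_conj[OF ncar[OF H g1] ncar[OF K g2] g] ze by simp
  moreover have "g \<otimes> g1 \<otimes> inv g \<in> H" using nconj[OF H g g1] .
  moreover have "g \<otimes> g2 \<otimes> inv g \<in> K" using nconj[OF K g g2] .
  ultimately show "g \<otimes> z \<otimes> inv g \<in> {commutator G g1 g2 |g1 g2. g1 \<in> H \<and> g2 \<in> K}" by blast
qed

lemma comm_in: "g1 \<in> H \<Longrightarrow> g2 \<in> K \<Longrightarrow> commutator G g1 g2 \<in> comm_subgroup G H K"
  unfolding comm_subgroup_def by (rule generate.incl) blast

lemma b_nonneg:
  assumes K: "subgroup K G" and g: "g \<in> carrier G"
  shows "0 \<le> b_fun G p K g"
proof -
  have KZ: "subgroup (K \<inter> centralizer_elt G g) G" using subgroups_Inter_pair[OF K centr_sub[OF g]] .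
  have c0: "0 < card (K \<inter> centralizer_elt G g)" using card_sub_pos[OF KZ] .
  have "card (K \<inter> centralizer_elt G g) \<le> card K" using card_mono[OF sub_fin[OF K]] by blast
  then have "1 \<le> real (card K) / real (card (K \<inter> centralizer_elt G g))" using c0 by simp
  then show ?thesis unfolding b_fun_def using p_ge2 by simp
qed

lemma b_drop:
  assumes H: "H \<lhd> G" and L: "L \<lhd> G" and L': "L' \<lhd> G" and LL: "L' \<subseteq> L"
    and g: "g \<in> H" and l: "l \<in> L" and nS: "commutator G g l \<notin> comm_subgroup G H L'"
    and A: "subgroup A G" and AL: "A \<subseteq> L'"
  shows "b_fun G p A g \<le> b_fun G p L g - 1"
proof -
  define Cz where "Cz = centralizer_elt G g"
  have gc: "g \<in> carrier G" using ncar[OF H g] .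
  have Czs: "subgroup Cz G" unfolding Cz_def using centr_sub[OF gc] .
  have Ls: "subgroup L G" using nsub[OF L] .
  have L's: "subgroup L' G" using nsub[OF L'] .
  have Cg: "subgroup (L \<inter> Cz) G" using subgroups_Inter_pair[OF Ls Czs] .
  have L'Z: "subgroup (L' \<inter> Cz) G" using subgroups_Inter_pair[OF L's Czs] .
  have AZ: "subgroup (A \<inter> Cz) G" using subgroups_Inter_pair[OF A Czs] .
  define P where "P = L' <#> (L \<inter> Cz)"
  have Ps: "subgroup P G" unfolding P_def using normal_prod_sub[OF L' Cg] .
  have PL: "P \<subseteq> L" unfolding P_def set_mult_def using LL subgroup.m_closed[OF Ls] by blast
  have lP: "l \<notin> P"
  proof
    assume "l \<in> P"
    then obtain l' c where l': "l' \<in> L'" and c: "c \<in> L \<inter> Cz" and le: "l = l' \<otimes> c"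
      unfolding P_def set_mult_mem by blast
    have l'c: "l' \<in> carrier G" using ncar[OF L' l'] .
    have cc: "c \<in> carrier G" and cg: "g \<otimes> c = c \<otimes> g" using c unfolding Cz_def centralizer_elt_def by auto
    have ie: "inv g \<otimes> inv c = inv c \<otimes> inv g"
    proof -
      have "inv (c \<otimes> g) = inv (g \<otimes> c)" using cg by simp
      then show ?thesis using cc gc by (simp add: inv_mult_group)
    qed
    have sw: "inv g \<otimes> (inv c \<otimes> z) = inv c \<otimes> (inv g \<otimes> z)" if "z \<in> carrier G" for z
    proof -
      have "inv g \<otimes> (inv c \<otimes> z) = (inv g \<otimes> inv c) \<otimes> z" using that cc gc by (simp add: m_assoc)
      also have "\<dots> = (inv c \<otimes> inv g) \<otimes> z" using ie by simp
      also have "\<dots> = inv c \<otimes> (inv g \<otimes> z)" using that cc gc by (simp add: m_assoc)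
      finally show ?thesis .
    qed
    have "commutator G g l = inv g \<otimes> (inv c \<otimes> (inv l' \<otimes> (g \<otimes> (l' \<otimes> c))))"
      unfolding commutator_def le using gc l'c cc by (simp add: m_assoc inv_mult_group)
    also have "\<dots> = inv c \<otimes> (inv g \<otimes> (inv l' \<otimes> (g \<otimes> (l' \<otimes> c))))"
      using sw gc l'c cc by simp
    also have "\<dots> = inv c \<otimes> commutator G g l' \<otimes> inv (inv c)"
      unfolding commutator_def using gc l'c cc by (simp add: m_assoc)
    finally have e: "commutator G g l = inv c \<otimes> commutator G g l' \<otimes> inv (inv c)" .
    have "commutator G g l' \<in> comm_subgroup G H L'" using comm_in[OF g l'] .
    then have "inv c \<otimes> commutator G g l' \<otimes> inv (inv c) \<in> comm_subgroup G H L'"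
      using nconj[OF comm_normal[OF H L'] inv_closed[OF cc]] by blast
    then show False using e nS by simp
  qed
  have "P \<noteq> L" using lP l by blast
  then have c1: "card P * p \<le> card L" using card_proper[OF Ps Ls PL] by blast
  have pf: "card P * card (L' \<inter> (L \<inter> Cz)) = card L' * card (L \<inter> Cz)"
    unfolding P_def using prod_formula[OF L's Cg] .
  have e2: "L' \<inter> (L \<inter> Cz) = L' \<inter> Cz" using LL by blast
  have KC: "card L' * card (L \<inter> Cz) * p \<le> card L * card (L' \<inter> Cz)"
  proof -
    have "card L' * card (L \<inter> Cz) * p = card P * p * card (L' \<inter> Cz)" using pf e2 by simp
    also have "\<dots> \<le> card L * card (L' \<inter> Cz)" using c1 by simp
    finally show ?thesis .
  qed
  have IM: "card A * card (L' \<inter> Cz) \<le> card L' * card (A \<inter> Cz)"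
    using index_mono[OF A L's Czs AL] .
  have pA: "0 < card A" using card_sub_pos[OF A] .
  have pAZ: "0 < card (A \<inter> Cz)" using card_sub_pos[OF AZ] .
  have pL'Z: "0 < card (L' \<inter> Cz)" using card_sub_pos[OF L'Z] .
  have pCg: "0 < card (L \<inter> Cz)" using card_sub_pos[OF Cg] .
  have pp: "0 < p" using p_ge2 by simp
  define a1 where "a1 = real (card A)"
  define a2 where "a2 = real (card (A \<inter> Cz))"
  define b1 where "b1 = real (card L')"
  define b2 where "b2 = real (card (L' \<inter> Cz))"
  define c1' where "c1' = real (card L)"
  define c2 where "c2 = real (card (L \<inter> Cz))"
  define q where "q = real p"
  have IMr: "a1 * b2 \<le> b1 * a2" unfolding a1_def a2_def b1_def b2_def using IM by (simp only: of_nat_mult[symmetric] of_nat_le_iff)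
  have KCr: "b1 * c2 * q \<le> c1' * b2" unfolding b1_def b2_def c1'_def c2_def q_def using KC by (simp only: of_nat_mult[symmetric] of_nat_le_iff)
  have pos: "0 < a1" "0 < a2" "0 < b2" "0 < c2" "0 < q"
    unfolding a1_def a2_def b2_def c2_def q_def using pA pAZ pL'Z pCg pp by auto
  have "a1 / a2 \<le> b1 / b2" using IMr pos by (simp add: field_simps)
  also have "b1 / b2 \<le> (c1' / c2) / q" using KCr pos by (simp add: field_simps)
  finally have r: "a1 / a2 \<le> (c1' / c2) / q" .
  have "log q (a1 / a2) \<le> log q (c1' / c2) - 1"
    using log_drop[of "a1 / a2" "c1' / c2"] r pos unfolding q_def by simp
  then show ?thesis unfolding b_fun_def Cz_def[symmetric] a1_def a2_def c1'_def c2_def q_def .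
qed

lemma D_props:
  assumes H: "H \<lhd> G" and L: "L \<lhd> G" and L': "L' \<lhd> G" and LL: "L' \<subseteq> L"
  shows "{y \<in> H. \<forall>l\<in>L. commutator G y l \<in> comm_subgroup G H L'} \<lhd> G"
    and "comm_subgroup G H L \<noteq> comm_subgroup G H L' \<Longrightarrow> {y \<in> H. \<forall>l\<in>L. commutator G y l \<in> comm_subgroup G H L'} \<noteq> H"
proof -
  define S where "S = comm_subgroup G H L'"
  define D where "D = {y \<in> H. \<forall>l\<in>L. commutator G y l \<in> S}"
  have Sn: "S \<lhd> G" unfolding S_def using comm_normal[OF H L'] .
  have Ss: "subgroup S G" using nsub[OF Sn] .
  have Hc: "H \<subseteq> carrier G" using nsub[OF H] subgroup.subset by blast
  have DH: "D \<subseteq> H" unfolding D_def by blast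
  have Ds: "subgroup D G"
  proof (rule fin_subgroupI)
    show "D \<subseteq> carrier G" using DH Hc by blast
    have "\<forall>l\<in>L. commutator G \<one> l \<in> S"
    proof
      fix l assume "l \<in> L"
      then have lc: "l \<in> carrier G" using ncar[OF L] by blast
      have "commutator G \<one> l = \<one>" unfolding commutator_def using lc by simp
      then show "commutator G \<one> l \<in> S" using subgroup.one_closed[OF Ss] by simp
    qed
    then show "\<one> \<in> D" unfolding D_def using subgroup.one_closed[OF nsub[OF H]] by blast
    fix y z assume y: "y \<in> D" and z: "z \<in> D"
    have yc: "y \<in> carrier G" and zc: "z \<in> carrier G" using y z DH Hc by auto
    have "\<forall>l\<in>L. commutator G (y \<otimes> z) l \<in> S"
    proof
      fix l assume l: "l \<in> L"
      then have lc: "l \<in> carrier G" using ncar[OF L] by blast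
      have e: "commutator G (y \<otimes> z) l = (inv z \<otimes> commutator G y l \<otimes> inv (inv z)) \<otimes> commutator G z l"
        unfolding commutator_def using yc zc lc by (simp add: m_assoc inv_mult_group icl icr)
      have a1: "inv z \<otimes> commutator G y l \<otimes> inv (inv z) \<in> S"
        using nconj[OF Sn inv_closed[OF zc]] y l unfolding D_def by blast
      have a2: "commutator G z l \<in> S" using z l unfolding D_def by blast
      show "commutator G (y \<otimes> z) l \<in> S" using e subgroup.m_closed[OF Ss a1 a2] by simp
    qed
    moreover have "y \<otimes> z \<in> H" using y z DH subgroup.m_closed[OF nsub[OF H]] by blast
    ultimately show "y \<otimes> z \<in> D" unfolding D_def by blast
  qed
  show "{y \<in> H. \<forall>l\<in>L. commutator G y l \<in> comm_subgroup G H L'} \<lhd> G"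
    unfolding S_def[symmetric] D_def[symmetric]
  proof (rule normal_invI[OF Ds])
    fix k y assume k: "k \<in> carrier G" and y: "y \<in> D"
    have yc: "y \<in> carrier G" using y DH Hc by blast
    have "\<forall>l\<in>L. commutator G (k \<otimes> y \<otimes> inv k) l \<in> S"
    proof
      fix l assume l: "l \<in> L"
      then have lc: "l \<in> carrier G" using ncar[OF L] by blast
      have ik: "inv k \<in> carrier G" using k by simp
      have l2: "inv k \<otimes> l \<otimes> inv (inv k) \<in> L" using nconj[OF L ik l] .
      have e: "commutator G (k \<otimes> y \<otimes> inv k) l = k \<otimes> commutator G y (inv k \<otimes> l \<otimes> inv (inv k)) \<otimes> inv k"
        unfolding commutator_def using yc k lc by (simp add: m_assoc inv_mult_group icl icr)
      have "commutator G y (inv k \<otimes> l \<otimes> inv (inv k)) \<in> S" using y l2 unfolding D_def by blast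
      then show "commutator G (k \<otimes> y \<otimes> inv k) l \<in> S" using e nconj[OF Sn k] by simp
    qed
    moreover have "k \<otimes> y \<otimes> inv k \<in> H" using nconj[OF H k] y DH by blast
    ultimately show "k \<otimes> y \<otimes> inv k \<in> D" unfolding D_def by blast
  qed
  assume ne: "comm_subgroup G H L \<noteq> comm_subgroup G H L'"
  show "{y \<in> H. \<forall>l\<in>L. commutator G y l \<in> comm_subgroup G H L'} \<noteq> H"
    unfolding S_def[symmetric] D_def[symmetric]
  proof
    assume DeH: "D = H"
    have "{commutator G g1 g2 |g1 g2. g1 \<in> H \<and> g2 \<in> L} \<subseteq> S"
    proof
      fix z assume "z \<in> {commutator G g1 g2 |g1 g2. g1 \<in> H \<and> g2 \<in> L}"
      then obtain g1 g2 where g1: "g1 \<in> H" and g2: "g2 \<in> L" and z: "z = commutator G g1 g2" by blast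
      have "g1 \<in> D" using g1 DeH by simp
      then show "z \<in> S" using z g2 unfolding D_def by blast
    qed
    then have "comm_subgroup G H L \<subseteq> S" unfolding comm_subgroup_def using generate_subgroup_incl[OF _ Ss] by blast
    moreover have "S \<subseteq> comm_subgroup G H L" unfolding S_def comm_subgroup_def
      by (rule mono_generate) (use LL in blast)
    ultimately show False using ne S_def by blast
  qed
qed

lemma step:
  assumes f: "f \<in> F_class G" and I: "finite I" "card I < p" "i1 \<in> I"
    and m: "1 \<le> m" and H: "H \<lhd> G"
    and Cp: "\<forall>i\<in>I. C i \<lhd> G \<and> C i \<subseteq> H \<and> C i \<noteq> H"
    and bd: "\<forall>g\<in>H - (\<Union>i\<in>I. C i). b_fun G p (f H m) g \<le> real n"
    and IH: "\<And>m' H' C'. 0 < n \<Longrightarrow> 1 \<le> m' \<Longrightarrow> H' \<lhd> G \<Longrightarrow> (\<forall>i\<in>I. C' i \<lhd> G \<and> C' i \<subseteq> H' \<and> C' i \<noteq> H')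
        \<Longrightarrow> (\<forall>g\<in>H' - (\<Union>i\<in>I. C' i). b_fun G p (f H' m') g \<le> real (n - 1))
        \<Longrightarrow> \<exists>N. N \<lhd> G \<and> N \<subseteq> H' \<and> card H' \<le> p ^ (n - 1) * card N \<and> cl_f G f N \<le> (n - 1) + m'
              \<and> \<not> N \<subseteq> (\<Union>i\<in>I. C' i)"
  shows "\<exists>N. N \<lhd> G \<and> N \<subseteq> H \<and> card H \<le> p ^ n * card N \<and> cl_f G f N \<le> n + m
              \<and> \<not> N \<subseteq> (\<Union>i\<in>I. C i)"
proof -
  have fc: "(\<forall>N i. N \<lhd> G \<and> 1 \<le> i \<longrightarrow> f N i \<lhd> G) \<and>
     (\<forall>N M i j. N \<lhd> G \<and> M \<lhd> G \<and> N \<subseteq> M \<and> 1 \<le> j \<and> j \<le> i \<longrightarrow> f N i \<subseteq> f M j) \<and>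
     (\<forall>N i. N \<lhd> G \<and> 1 \<le> i \<and> \<not> f N i \<subseteq> centralizer_set G N \<longrightarrow>
            comm_subgroup G N (f N i) \<noteq> comm_subgroup G N (f N (i + 1)))"
    using f unfolding F_class_def by (rule CollectD)
  have fN: "f N i \<lhd> G" if "N \<lhd> G" "1 \<le> i" for N i
    by (rule fc[THEN conjunct1, rule_format]) (use that in simp)
  have fmono: "f N i \<subseteq> f M j" if "N \<lhd> G" "M \<lhd> G" "N \<subseteq> M" "1 \<le> j" "j \<le> i" for N M i j
    by (rule fc[THEN conjunct2, THEN conjunct1, rule_format]) (use that in simp)
  have fstr: "comm_subgroup G N (f N i) \<noteq> comm_subgroup G N (f N (i + 1))"
    if "N \<lhd> G" "1 \<le> i" "\<not> f N i \<subseteq> centralizer_set G N" for N i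
    by (rule fc[THEN conjunct2, THEN conjunct2, rule_format]) (use that in simp)
  have Hs: "subgroup H G" using nsub[OF H] .
  have Hc: "H \<subseteq> carrier G" using Hs subgroup.subset by blast
  have cIp: "card I \<le> p" using I(2) by simp
  have Cs: "subgroup (C i) G \<and> C i \<subseteq> H \<and> C i \<noteq> H" if "i \<in> I" for i
  proof -
    have "C i \<lhd> G \<and> C i \<subseteq> H \<and> C i \<noteq> H" using Cp that by (rule bspec)
    then show ?thesis using nsub by blast
  qed
  define L where "L = f H m"
  define L' where "L' = f H (m + 1)"
  have Ln: "L \<lhd> G" unfolding L_def using fN[OF H m] .
  have L'n: "L' \<lhd> G" unfolding L'_def using fN[OF H] m by simp
  have LL: "L' \<subseteq> L" unfolding L_def L'_def using fmono[OF H H _ m] by simp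
  show ?thesis
  proof (cases "L \<subseteq> centralizer_set G H")
    case True
    have cl: "cl_f G f H \<le> m" unfolding cl_f_def
      by (rule Least_le) (use m True L_def in simp)
    obtain x where xH: "x \<in> H" and xC: "\<forall>i\<in>I. x \<notin> C i" using cover[where K=C, OF Hs I(1) cIp Cs] by blast
    have "1 \<le> p ^ n" using p_ge2 by simp
    then have "card H \<le> p ^ n * card H" by simp
    moreover have "\<not> H \<subseteq> (\<Union>i\<in>I. C i)" using xH xC by blast
    ultimately show ?thesis using H cl by auto
  next
    case False
    define S where "S = comm_subgroup G H L'"
    define D where "D = {y \<in> H. \<forall>l\<in>L. commutator G y l \<in> S}"
    have Dn: "D \<lhd> G" unfolding D_def S_def using D_props(1)[OF H Ln L'n LL] .
    have "comm_subgroup G H L \<noteq> comm_subgroup G H L'"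
      using fstr[OF H m False[unfolded L_def]] unfolding L_def L'_def by simp
    then have DnH: "D \<noteq> H" unfolding D_def S_def using D_props(2)[OF H Ln L'n LL] by blast
    have DH: "D \<subseteq> H" unfolding D_def by blast
    define Pw where "Pw = (\<lambda>XS W. W \<lhd> G \<and> XS \<subseteq> W \<and> W \<subseteq> H \<and> card H = p * card W
           \<and> (\<forall>y\<in>H. \<forall>g\<in>carrier G. g \<otimes> y \<otimes> inv g \<otimes> inv y \<in> W) \<and> (\<forall>y\<in>H. y [^] p \<in> W))"
    have exW: "\<exists>W. Pw (C i) W" if i: "i \<in> I" for i
    proof -
      have ci: "C i \<lhd> G \<and> C i \<subseteq> H \<and> C i \<noteq> H" using Cp i by (rule bspec)
      then have c1: "C i \<lhd> G" and c2: "C i \<subseteq> H" and c3: "C i \<noteq> H" by auto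
      show ?thesis unfolding Pw_def using index_p_super[OF c1 H c2 c3] .
    qed
    then have "\<forall>i\<in>I. \<exists>W. Pw (C i) W" by (rule ballI)
    from bchoice[OF this] obtain W where Wp0: "\<forall>i\<in>I. Pw (C i) (W i)" ..
    have Wp1: "W i \<lhd> G" "C i \<subseteq> W i" "W i \<subseteq> H" "card H = p * card (W i)"
      "\<forall>y\<in>H. \<forall>g\<in>carrier G. g \<otimes> y \<otimes> inv g \<otimes> inv y \<in> W i" "\<forall>y\<in>H. y [^] p \<in> W i"
      if i: "i \<in> I" for i
    proof -
      have "Pw (C i) (W i)" using Wp0 i by (rule bspec)
      then show "W i \<lhd> G" "C i \<subseteq> W i" "W i \<subseteq> H" "card H = p * card (W i)"
        "\<forall>y\<in>H. \<forall>g\<in>carrier G. g \<otimes> y \<otimes> inv g \<otimes> inv y \<in> W i" "\<forall>y\<in>H. y [^] p \<in> W i"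
        unfolding Pw_def by auto
    qed
    have "\<exists>W. Pw D W" unfolding Pw_def using index_p_super[OF Dn H DH DnH] .
    then obtain WD where "Pw D WD" ..
    then have WDn: "WD \<lhd> G" and DWD: "D \<subseteq> WD" and WDH: "WD \<subseteq> H" and cWD: "card H = p * card WD"
      and WDc: "\<forall>y\<in>H. \<forall>g\<in>carrier G. g \<otimes> y \<otimes> inv g \<otimes> inv y \<in> WD" and WDp: "\<forall>y\<in>H. y [^] p \<in> WD"
      unfolding Pw_def by auto
    have cH0: "0 < card H" using card_sub_pos[OF Hs] .
    have neq: "K \<noteq> H" if "card H = p * card K" for K
    proof
      assume "K = H"
      then have "card H = p * card H" using that by simp
      then show False using cH0 p_ge2 by simp
    qed
    have Wi: "subgroup (W i) G \<and> W i \<subseteq> H \<and> W i \<noteq> H" if i: "i \<in> I" for i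
      using nsub[OF Wp1(1)[OF i]] Wp1(3)[OF i] neq[OF Wp1(4)[OF i]] by blast
    define K' where "K' = (\<lambda>oo. case oo of None \<Rightarrow> WD | Some i \<Rightarrow> W i)"
    define I' where "I' = insert None (Some ` I)"
    have fI': "finite I'" unfolding I'_def using I(1) by simp
    have "card I' = Suc (card I)" unfolding I'_def using I(1) by (simp add: card_image)
    then have cI': "card I' \<le> p" using I(2) by simp
    have K'p: "\<And>oo. oo \<in> I' \<Longrightarrow> subgroup (K' oo) G \<and> K' oo \<subseteq> H \<and> K' oo \<noteq> H"
    proof -
      fix oo assume oo: "oo \<in> I'"
      show "subgroup (K' oo) G \<and> K' oo \<subseteq> H \<and> K' oo \<noteq> H"
      proof (cases oo)
        case None
        then show ?thesis unfolding K'_def using nsub[OF WDn] WDH neq[OF cWD] by simp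
      next
        case (Some i)
        then have "i \<in> I" using oo unfolding I'_def by blast
        then show ?thesis unfolding K'_def using Some Wi by simp
      qed
    qed
    obtain x where xH: "x \<in> H" and xK: "\<forall>oo\<in>I'. x \<notin> K' oo" using cover[where K=K', OF Hs fI' cI' K'p] by blast
    have xWD: "x \<notin> WD" using xK unfolding I'_def K'_def by simp
    have xW: "\<forall>i\<in>I. x \<notin> W i" using xK unfolding I'_def K'_def by simp
    have xc: "x \<in> carrier G" using xH Hc by blast
    have xC: "x \<in> H - (\<Union>i\<in>I. C i)" using xH xW Wp1(2) by blast
    have xD: "x \<notin> D" using xWD DWD by blast
    then obtain l where l: "l \<in> L" and nS: "commutator G x l \<notin> S" unfolding D_def using xH by blast
    have "b_fun G p L' x \<le> b_fun G p L x - 1"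
      using b_drop[OF H Ln L'n LL xH l nS[unfolded S_def] nsub[OF L'n]] by simp
    moreover have "0 \<le> b_fun G p L' x" using b_nonneg[OF nsub[OF L'n] xc] .
    moreover have "b_fun G p L x \<le> real n" using bd xC L_def by blast
    ultimately have n0: "0 < n" by simp
    define U where "U = W i1 \<inter> WD"
    have W1p: "W i1 \<lhd> G" "W i1 \<subseteq> H" "card H = p * card (W i1)"
      "\<forall>y\<in>H. \<forall>g\<in>carrier G. g \<otimes> y \<otimes> inv g \<otimes> inv y \<in> W i1" "\<forall>y\<in>H. y [^] p \<in> W i1"
      using Wp1[OF I(3)] by blast+
    have Un: "U \<lhd> G" unfolding U_def using normal_subgroup_intersect[OF W1p(1) WDn] .
    have Us: "subgroup U G" using nsub[OF Un] .
    have Ucomm: "\<forall>y\<in>H. \<forall>g\<in>carrier G. g \<otimes> y \<otimes> inv g \<otimes> inv y \<in> U"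
      unfolding U_def using W1p(4) WDc by blast
    have xpU: "x [^] p \<in> U" unfolding U_def using W1p(5) WDp xH by blast
    define N where "N = {u \<otimes> x [^] k | u k. u \<in> U \<and> k < p}"
    have Ns: "subgroup N G" and cN: "card N \<le> p * card U" and UN: "U \<subseteq> N" and xN: "x \<in> N"
      unfolding N_def using cyc_ext_sub[OF Un xc xpU] by auto
    have NH: "N \<subseteq> H"
    proof
      fix z assume "z \<in> N"
      then obtain u and k :: nat where u: "u \<in> U" and z: "z = u \<otimes> x [^] k" unfolding N_def by blast
      have "u \<in> H" using u U_def W1p(2) by blast
      then show "z \<in> H" using z sub_pow[OF Hs xH] subgroup.m_closed[OF Hs] by blast
    qed
    have Nn: "N \<lhd> G" using between_normal[OF Ns UN NH Hc Ucomm] .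
    have WDs: "subgroup WD G" using nsub[OF WDn] .
    have NWDs: "subgroup (N \<inter> WD) G" using subgroups_Inter_pair[OF Ns WDs] .
    have NWD: "N \<inter> WD = U"
    proof -
      have sub: "U \<subseteq> N \<inter> WD" using UN U_def by blast
      have "N \<inter> WD \<noteq> N" using xN xWD by blast
      then have "card (N \<inter> WD) * p \<le> card N" using card_proper[OF NWDs Ns] by blast
      then have "card (N \<inter> WD) * p \<le> card U * p" using cN by (metis le_trans mult.commute)
      then have "card (N \<inter> WD) \<le> card U" using p_ge2 mult_le_cancel2 by simp
      then show ?thesis using card_seteq[OF sub_fin[OF NWDs] sub] by blast
    qed
    have cHN: "card H \<le> p * card N"
    proof -
      have W1s: "subgroup (W i1) G" using nsub[OF W1p(1)] .
      have im: "card (W i1) * card (H \<inter> WD) \<le> card H * card (W i1 \<inter> WD)"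
        using index_mono[OF W1s Hs WDs W1p(2)] .
      have "H \<inter> WD = WD" using WDH by blast
      then have "card (W i1) * card WD \<le> p * card WD * card U" using im cWD U_def by simp
      then have "card WD * card (W i1) \<le> card WD * (p * card U)" by (simp add: ac_simps)
      moreover have "0 < card WD" using card_sub_pos[OF WDs] .
      ultimately have "card (W i1) \<le> p * card U" by simp
      moreover have "card U * p \<le> card N"
      proof -
        have "U \<noteq> N" using xN xW I(3) U_def by blast
        then show ?thesis using card_proper[OF Us Ns UN] by blast
      qed
      ultimately have "p * card (W i1) \<le> p * card N" by (simp add: ac_simps)
      then show ?thesis using W1p(3) by simp
    qed
    define C' where "C' = (\<lambda>i. W i \<inter> N)"
    have C'p: "\<forall>i\<in>I. C' i \<lhd> G \<and> C' i \<subseteq> N \<and> C' i \<noteq> N"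
    proof
      fix i assume i: "i \<in> I"
      have "C' i \<lhd> G" unfolding C'_def using normal_subgroup_intersect[OF Wp1(1)[OF i] Nn] .
      moreover have "C' i \<noteq> N" unfolding C'_def using xN xW i by blast
      ultimately show "C' i \<lhd> G \<and> C' i \<subseteq> N \<and> C' i \<noteq> N" unfolding C'_def by blast
    qed
    have m1: "1 \<le> m + 1" by simp
    have bd': "\<forall>g\<in>N - (\<Union>i\<in>I. C' i). b_fun G p (f N (m + 1)) g \<le> real (n - 1)"
    proof
      fix g assume g: "g \<in> N - (\<Union>i\<in>I. C' i)"
      have gN: "g \<in> N" and gW: "\<forall>i\<in>I. g \<notin> W i" using g unfolding C'_def by auto
      have gH: "g \<in> H" using gN NH by blast
      have gC: "g \<in> H - (\<Union>i\<in>I. C i)" using gH gW Wp1(2) by blast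
      have gD: "g \<notin> D"
      proof
        assume "g \<in> D"
        then have "g \<in> N \<inter> WD" using gN DWD by blast
        then have "g \<in> W i1" using NWD U_def by blast
        then show False using gW I(3) by blast
      qed
      then obtain l where l: "l \<in> L" and nS: "commutator G g l \<notin> S" unfolding D_def using gH by blast
      have An: "f N (m + 1) \<lhd> G" using fN[OF Nn m1] .
      have AL: "f N (m + 1) \<subseteq> L'" unfolding L'_def using fmono[OF Nn H NH m1] by simp
      have "b_fun G p (f N (m + 1)) g \<le> b_fun G p L g - 1"
        using b_drop[OF H Ln L'n LL gH l nS[unfolded S_def] nsub[OF An] AL] .
      moreover have "b_fun G p L g \<le> real n" using bd gC L_def by blast
      ultimately show "b_fun G p (f N (m + 1)) g \<le> real (n - 1)" using n0 by (simp add: of_nat_diff)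
    qed
    obtain N' where N'n: "N' \<lhd> G" and N'N: "N' \<subseteq> N" and cN': "card N \<le> p ^ (n - 1) * card N'"
      and cl': "cl_f G f N' \<le> (n - 1) + (m + 1)" and nC': "\<not> N' \<subseteq> (\<Union>i\<in>I. C' i)"
      using IH[OF n0 m1 Nn C'p bd'] by blast
    have "card H \<le> p * (p ^ (n - 1) * card N')" using cHN cN' by (meson le_trans mult_le_mono2)
    also have "\<dots> = p ^ n * card N'" using n0 by (simp add: power_eq_if)
    finally have c: "card H \<le> p ^ n * card N'" .
    have cl: "cl_f G f N' \<le> n + m" using cl' n0 by simp
    have "\<not> N' \<subseteq> (\<Union>i\<in>I. C i)"
    proof
      assume a: "N' \<subseteq> (\<Union>i\<in>I. C i)"
      obtain y where y: "y \<in> N'" and yC': "\<forall>i\<in>I. y \<notin> C' i" using nC' by blast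
      have "y \<in> N" using y N'N by blast
      then have "\<forall>i\<in>I. y \<notin> W i" using yC' unfolding C'_def by blast
      then have "\<forall>i\<in>I. y \<notin> C i" using Wp1(2) by blast
      then show False using a y by blast
    qed
    then show ?thesis using N'n N'N NH c cl by blast
  qed
qed

lemma main:
  assumes f: "f \<in> F_class G" and I: "finite I" "card I < p" "i1 \<in> I"
  shows "1 \<le> m \<Longrightarrow> H \<lhd> G \<Longrightarrow> (\<forall>i\<in>I. C i \<lhd> G \<and> C i \<subseteq> H \<and> C i \<noteq> H)
        \<Longrightarrow> (\<forall>g\<in>H - (\<Union>i\<in>I. C i). b_fun G p (f H m) g \<le> real n)
        \<Longrightarrow> \<exists>N. N \<lhd> G \<and> N \<subseteq> H \<and> card H \<le> p ^ n * card N \<and> cl_f G f N \<le> n + m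
              \<and> \<not> N \<subseteq> (\<Union>i\<in>I. C i)"
proof (induction n arbitrary: m H C)
  case 0
  show ?case by (rule step[OF f I 0(1) 0(2) 0(3) 0(4)]) simp
next
  case (Suc n)
  show ?case
    by (rule step[OF f I Suc(2) Suc(3) Suc(4) Suc(5)]) (use Suc(1) in simp)
qed

end

theorem theorem1:
  fixes G :: "('a, 'b) monoid_scheme" and p n m :: nat and f :: "'a set \<Rightarrow> nat \<Rightarrow> 'a set"
    and H :: "'a set" and C :: "nat \<Rightarrow> 'a set"
  assumes "Factorial_Ring.prime p" and "p > 2" and "m \<ge> 1"
    and "p_group G p"
    and "f \<in> F_class G"
    and "H \<lhd> G"
    and "\<And>i. i \<in> {1..p-1} \<Longrightarrow> C i \<lhd> G"
    and "\<And>i. i \<in> {1..p-1} \<Longrightarrow> C i \<subset> H"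
    and "\<And>g. g \<in> H - (\<Union>i\<in>{1..p-1}. C i) \<Longrightarrow> b_fun G p (f H m) g \<le> real n"
  shows "\<exists>N. N \<lhd> G \<and> N \<subseteq> H
            \<and> log (real p) (real (card H) / real (card N)) \<le> real n
            \<and> cl_f G f N \<le> n + m
            \<and> \<not> N \<subseteq> (\<Union>i\<in>{1..p-1}. C i)"
proof -
  have grp: "group G" and fin: "finite (carrier G)" and "\<exists>k. card (carrier G) = p ^ k"
    using assms(4) unfolding p_group_def by auto
  then obtain k where k: "card (carrier G) = p ^ k" by blast
  interpret pgrp G p k
    by (rule pgrp.intro[OF grp]) (unfold_locales, use assms(1) fin k in \<open>auto simp: order_def\<close>)
  have I: "finite {1..p-1}" "card {1..p-1} < p" "(1::nat) \<in> {1..p-1}" using assms(2) by auto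
  have Cp: "\<forall>i\<in>{1..p-1}. C i \<lhd> G \<and> C i \<subseteq> H \<and> C i \<noteq> H" using assms(7,8) by blast
  have bd: "\<forall>g\<in>H - (\<Union>i\<in>{1..p-1}. C i). b_fun G p (f H m) g \<le> real n" using assms(9) by blast
  obtain N where Nn: "N \<lhd> G" and NH: "N \<subseteq> H" and cN: "card H \<le> p ^ n * card N"
    and cl: "cl_f G f N \<le> n + m" and nC: "\<not> N \<subseteq> (\<Union>i\<in>{1..p-1}. C i)"
    using main[OF assms(5) I assms(3) assms(6) Cp bd] by blast
  have N0: "0 < card N" using card_sub_pos[OF nsub[OF Nn]] .
  have H0: "0 < card H" using card_sub_pos[OF nsub[OF assms(6)]] .
  have p1: "1 < real p" using assms(2) by simp
  have "real (card H) \<le> real p ^ n * real (card N)" using cN by (metis of_nat_le_iff of_nat_mult of_nat_power)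
  then have r: "real (card H) / real (card N) \<le> real p ^ n" using N0 by (simp add: divide_le_eq)
  have pos: "0 < real (card H) / real (card N)" using N0 H0 by simp
  have "log (real p) (real (card H) / real (card N)) \<le> log (real p) (real p ^ n)"
    using log_mono[OF p1 pos r] .
  also have "\<dots> = real n" using p1 by (simp add: log_nat_power)
  finally have "log (real p) (real (card H) / real (card N)) \<le> real n" .
  then show ?thesis using Nn NH cl nC by blast
qed

end
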